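(* Let $(M,g)$ be a complete Riemannian manifold and let $V\in L^\infty_{\rm loc}(M)$ with $V\ge1$ a.e., $\operatorname{ess\,lim}_{d(p,p_0)\to\infty}V(p)=\infty$, satisfying the doubling condition. Then for every $\epsilon>0$ there exists $A=A(\epsilon)>0$ such that for all $t\in(0,2]$, $$\int_{\{x\in M:V(x)\ge A/t\}}e^{-tV(x)}\,dx\le\epsilon\int_M e^{-tV(x)}\,dx.$$
   Context: $d$ is the Riemannian distance, $p_0\in M$ fixed, $dx$ and $|\cdot|$ the Riemannian measure. $\operatorname{ess\,lim}V=\infty$ means: for every $L>0$ there is $R>0$ with $V(p)\ge L$ for a.e. $p$ with $d(p,p_0)\ge R$. Doubling condition: with $\sigma(\lambda)=|\{x:V(x)\le\lambda\}|$, there are $C_V,\lambda_0>0$ with $\sigma(2\lambda)\le C_V\sigma(\lambda)$ for all $\lambda\ge\lambda_0$. *)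

theory Defs
  imports "HOL-Analysis.Analysis"
begin

definition sublevel_measure :: "'a measure \<Rightarrow> ('a \<Rightarrow> real) \<Rightarrow> real \<Rightarrow> ennreal" where
  "sublevel_measure M V lam = emeasure M {x \<in> space M. V x \<le> lam}"

definition doubling_potential :: "'a measure \<Rightarrow> ('a \<Rightarrow> real) \<Rightarrow> bool" where
  "doubling_potential M V \<longleftrightarrow>
     (\<exists>C\<^sub>V lam0. C\<^sub>V > 0 \<and> lam0 > 0 \<and>
        (\<forall>lam\<ge>lam0. sublevel_measure M V (2 * lam) \<le> ennreal C\<^sub>V * sublevel_measure M V lam))"

definition Linf_loc :: "('a::topological_space) measure \<Rightarrow> ('a \<Rightarrow> real) \<Rightarrow> bool" where
  "Linf_loc M V \<longleftrightarrow> V \<in> borel_measurable M \<and>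
     (\<forall>K. compact K \<longrightarrow> (\<exists>C. AE x in M. x \<in> K \<longrightarrow> \<bar>V x\<bar> \<le> C))"

definition ess_lim_infinity :: "('a::metric_space) measure \<Rightarrow> 'a \<Rightarrow> ('a \<Rightarrow> real) \<Rightarrow> bool" where
  "ess_lim_infinity M p\<^sub>0 V \<longleftrightarrow>
     (\<forall>L>0. \<exists>R>0. AE p in M. dist p p\<^sub>0 \<ge> R \<longrightarrow> V p \<ge> L)"

end

theory Submission
  imports Defs
begin

lemma ratio_summable:
  fixes C l :: real
  assumes C: "C > 0" and l: "l > 0"
  shows "summable (\<lambda>k::nat. C^(k+1) * exp (-(2^k * l)))"
proof -
  obtain N :: nat where N: "real N * l \<ge> ln (2*C)"
    using reals_Archimedean3[OF l] by (metis less_eq_real_def)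
  show ?thesis
  proof (rule summable_ratio_test[of "1/2" N])
    fix n :: nat assume n: "n \<ge> N"
    have "real n \<le> 2^n" using of_nat_less_two_power[of n, where ?'a=real] by simp
    hence "real N * l \<le> 2^n * l" using n l
      by (metis mult_right_mono of_nat_le_iff order_trans less_eq_real_def)
    hence "ln (2*C) \<le> 2^n * l" using N by linarith
    hence "exp (ln (2*C)) \<le> exp (2^n*l)" by simp
    hence e: "2*C \<le> exp (2^n*l)" using C by simp
    have "C^(Suc n+1) * exp (-(2^Suc n * l)) = (C * exp (-(2^n*l))) * (C^(n+1) * exp (-(2^n * l)))"
      by (simp add: exp_add[symmetric] algebra_simps)
    also have "C * exp (-(2^n*l)) \<le> 1/2"
      using e C by (simp add: exp_minus field_simps)
    hence "(C * exp (-(2^n*l))) * (C^(n+1) * exp (-(2^n * l))) \<le> 1/2 * (C^(n+1) * exp (-(2^n * l)))"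
      using C by (intro mult_right_mono) auto
    finally show "norm (C^(Suc n+1) * exp (-(2^Suc n * l))) \<le> 1/2 * norm (C^(n+1) * exp (-(2^n * l)))"
      using C by simp
  qed simp
qed

theorem proposition3p5:
  fixes M :: "('a::heine_borel) measure" and V :: "'a \<Rightarrow> real" and p\<^sub>0 :: 'a
  assumes sets_M: "sets M = sets borel"
    and compact_finite: "\<And>K. compact K \<Longrightarrow> emeasure M K < \<infinity>"
    and open_pos: "\<And>U. open U \<Longrightarrow> U \<noteq> {} \<Longrightarrow> emeasure M U > 0"
    and V_loc: "Linf_loc M V"
    and V_ge1: "AE x in M. V x \<ge> 1"
    and V_lim: "ess_lim_infinity M p\<^sub>0 V"
    and V_doubling: "doubling_potential M V"
  shows "\<forall>\<epsilon>>0. \<exists>A>0. \<forall>t\<in>{0<..2}.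
           (\<integral>\<^sup>+ x. ennreal (exp (- t * V x)) * indicator {x. V x \<ge> A / t} x \<partial>M)
             \<le> ennreal \<epsilon> * (\<integral>\<^sup>+ x. ennreal (exp (- t * V x)) \<partial>M)"
proof (intro allI impI)
  fix \<epsilon> :: real assume eps: "\<epsilon> > 0"
  have Vm: "V \<in> borel_measurable M" using V_loc unfolding Linf_loc_def by blast
  obtain C l0 where C: "C > 0" and l0: "l0 > 0"
    and dbl: "\<And>lam. lam \<ge> l0 \<Longrightarrow> sublevel_measure M V (2 * lam) \<le> ennreal C * sublevel_measure M V lam"
    using V_doubling unfolding doubling_potential_def by blast
  define \<sigma> where "\<sigma> = sublevel_measure M V"
  have iter: "\<sigma> (2^m * a) \<le> ennreal (C^m) * \<sigma> a" if a: "a \<ge> l0" for a m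
  proof (induct m)
    case 0 then show ?case by simp
  next
    case (Suc m)
    have "(1::real) \<le> 2^m" by simp
    hence "a \<le> 2^m * a" using a l0 by (metis mult_le_cancel_right1 order.strict_trans1 nle_le not_less)
    hence ge: "2^m * a \<ge> l0" using a by linarith
    have "\<sigma> (2^Suc m * a) = \<sigma> (2 * (2^m * a))" by (simp add: mult.assoc)
    also have "\<dots> \<le> ennreal C * \<sigma> (2^m * a)" using dbl[OF ge] unfolding \<sigma>_def .
    also have "\<dots> \<le> ennreal C * (ennreal (C^m) * \<sigma> a)" using Suc by (intro mult_left_mono) auto
    also have "\<dots> = ennreal (C^Suc m) * \<sigma> a"
      using C by (simp add: ennreal_mult mult.assoc)
    finally show ?case .
  qed
  define l where "l = 2 * l0"
  have l: "l > 0" using l0 by (simp add: l_def)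
  define b where "b = (\<lambda>k::nat. C^(k+1) * exp (-(2^k * l)))"
  have bnn: "b k \<ge> 0" for k using C by (simp add: b_def)
  have sb: "summable b" unfolding b_def using ratio_summable[OF C l] .
  have pos: "\<epsilon> * exp (- l) > 0" using eps by simp
  obtain j where j: "norm (\<Sum>i. b (i + j)) < \<epsilon> * exp (- l)"
    using suminf_exist_split[OF pos sb] by blast
  have sbj: "summable (\<lambda>i. b (i + j))" using sb by (simp add: summable_iff_shift)
  define A where "A = 2^j * l"
  have Apos: "A > 0" using l by (simp add: A_def)
  show "\<exists>A>0. \<forall>t\<in>{0<..2}.
           (\<integral>\<^sup>+ x. ennreal (exp (- t * V x)) * indicator {x. V x \<ge> A / t} x \<partial>M)
             \<le> ennreal \<epsilon> * (\<integral>\<^sup>+ x. ennreal (exp (- t * V x)) \<partial>M)"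
  proof (intro exI[of _ A] conjI Apos ballI)
    fix t :: real assume "t \<in> {0<..2}"
    hence t: "t > 0" "t \<le> 2" by auto
    define a where "a = l / t"
    have apos: "a > 0" using l t by (simp add: a_def)
    have al0: "a \<ge> l0" using t l0 unfolding a_def l_def by (simp add: field_simps)
    have ta: "t * a = l" using t by (simp add: a_def)
    define S where "S = (\<lambda>n x. ennreal (exp (-(2^(n+j) * l))) * indicator {x \<in> space M. V x \<le> 2^(n+j+1) * a} x)"
    have pw: "ennreal (exp (- t * V x)) * indicator {x. V x \<ge> A / t} x \<le> (\<Sum>n. S n x)"
      if x: "x \<in> space M" for x
    proof (cases "V x \<ge> A / t")
      case False then show ?thesis by simp
    next
      case True
      hence Vx: "V x \<ge> 2^j * a" unfolding A_def a_def by (simp add: field_simps)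
      obtain n0 :: nat where n0: "V x / a < 2^n0" using real_arch_pow[of 2 "V x / a"] by auto
      hence ex: "\<exists>n. V x < 2^n * a" using apos by (auto simp: field_simps)
      define m where "m = (LEAST n. V x < 2^n * a)"
      have m1: "V x < 2^m * a" unfolding m_def by (rule LeastI_ex[OF ex])
      have m2: "\<not> V x < 2^k * a" if "k < m" for k using not_less_Least[OF that[unfolded m_def]] m_def by simp
      have "j < m"
      proof (rule ccontr)
        assume "\<not> j < m"
        hence "(2::real)^m \<le> 2^j" by simp
        hence "2^m * a \<le> 2^j * a" using apos by simp
        thus False using m1 Vx by linarith
      qed
      then obtain n where mn: "m = Suc (n + j)" by (metis less_imp_Suc_add add.commute)
      have lo: "2^(n+j) * a \<le> V x" using m2[of "n+j"] mn by simp
      have hi: "V x \<le> 2^(n+j+1) * a" using m1 mn by simp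
      have e1: "t * (2^(n+j) * a) \<le> t * V x" using mult_left_mono[OF lo, of t] t by simp
      have e2: "t * (2^(n+j) * a) = 2^(n+j) * (t * a)" by (simp add: algebra_simps)
      have "2^(n+j) * l \<le> t * V x" using e1 e2 ta by simp
      hence "exp (- t * V x) \<le> exp (-(2^(n+j) * l))" by simp
      hence "ennreal (exp (- t * V x)) * indicator {x. V x \<ge> A / t} x \<le> S n x"
        using True hi x unfolding S_def by (simp add: ennreal_leI)
      also have "\<dots> \<le> (\<Sum>n. S n x)" using sum_le_suminf[of "\<lambda>k. S k x" "{n}"] by simp
      finally show ?thesis .
    qed
    have setm: "{x \<in> space M. V x \<le> c} \<in> sets M" for c
      using Vm by measurable
    have meas: "S n \<in> borel_measurable M" for n
      unfolding S_def using setm by (intro borel_measurable_times_ennreal) auto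
    have "(\<integral>\<^sup>+ x. ennreal (exp (- t * V x)) * indicator {x. V x \<ge> A / t} x \<partial>M)
        \<le> (\<integral>\<^sup>+ x. (\<Sum>n. S n x) \<partial>M)"
      using pw by (intro nn_integral_mono) auto
    also have "\<dots> = (\<Sum>n. integral\<^sup>N M (S n))"
      using meas by (rule nn_integral_suminf)
    also have "\<dots> = (\<Sum>n. ennreal (exp (-(2^(n+j) * l))) * \<sigma> (2^(n+j+1) * a))"
      unfolding S_def \<sigma>_def sublevel_measure_def using setm
      by (simp add: nn_integral_cmult_indicator)
    also have "\<dots> \<le> (\<Sum>n. ennreal (exp (-(2^(n+j) * l))) * (ennreal (C^(n+j+1)) * \<sigma> a))"
    proof (intro suminf_le mult_left_mono)
      fix n show "\<sigma> (2^(n+j+1) * a) \<le> ennreal (C^(n+j+1)) * \<sigma> a" by (rule iter[OF al0])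
    qed auto
    also have "\<dots> = (\<Sum>n. ennreal (b (n+j)) * \<sigma> a)"
    proof (rule suminf_cong)
      fix n
      have "ennreal (b (n+j)) = ennreal (exp (-(2^(n+j) * l))) * ennreal (C^(n+j+1))"
        unfolding b_def using C by (simp add: ennreal_mult[symmetric] mult.commute)
      thus "ennreal (exp (-(2^(n+j) * l))) * (ennreal (C^(n+j+1)) * \<sigma> a) = ennreal (b (n+j)) * \<sigma> a"
        by (simp add: mult.assoc)
    qed
    also have "\<dots> = ennreal (\<Sum>n. b (n+j)) * \<sigma> a"
      using suminf_ennreal2[OF bnn sbj] by simp
    also have "\<dots> \<le> ennreal (\<epsilon> * exp (- l)) * \<sigma> a"
      using j bnn suminf_nonneg[OF sbj] by (intro mult_right_mono ennreal_leI) auto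
    also have "\<dots> = ennreal \<epsilon> * (ennreal (exp (- l)) * \<sigma> a)"
      using eps by (simp add: ennreal_mult mult.assoc)
    also have "\<dots> \<le> ennreal \<epsilon> * (\<integral>\<^sup>+ x. ennreal (exp (- t * V x)) \<partial>M)"
    proof (intro mult_left_mono order_refl)
      have "ennreal (exp (- l)) * \<sigma> a = (\<integral>\<^sup>+ x. ennreal (exp (- l)) * indicator {x \<in> space M. V x \<le> a} x \<partial>M)"
        unfolding \<sigma>_def sublevel_measure_def using setm by (simp add: nn_integral_cmult_indicator)
      also have "\<dots> \<le> (\<integral>\<^sup>+ x. ennreal (exp (- t * V x)) \<partial>M)"
      proof (intro nn_integral_mono)
        fix x assume "x \<in> space M"
        show "ennreal (exp (- l)) * indicator {x \<in> space M. V x \<le> a} x \<le> ennreal (exp (- t * V x))"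
        proof (cases "V x \<le> a")
          case True
          hence "t * V x \<le> l" using mult_left_mono[OF True, of t] t ta by simp
          thus ?thesis using True \<open>x \<in> space M\<close> by (simp add: ennreal_leI)
        qed (simp)
      qed
      finally show "ennreal (exp (- l)) * \<sigma> a \<le> (\<integral>\<^sup>+ x. ennreal (exp (- t * V x)) \<partial>M)" .
    qed auto
    finally show "(\<integral>\<^sup>+ x. ennreal (exp (- t * V x)) * indicator {x. V x \<ge> A / t} x \<partial>M)
             \<le> ennreal \<epsilon> * (\<integral>\<^sup>+ x. ennreal (exp (- t * V x)) \<partial>M)" .
  qed
qed

end
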